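(* Let $k\ge3$ and $1\le s\le k$, $\mathbf n=(n_1,\dots,n_k)$, $r\le\min\{n_1,\dots,n_s\}$. If a tensor $\mathcal A\in P_s(\mathbf n,r)$ has a decomposition $\mathcal A=\sum_{i=1}^r\sigma_i\mathbf a^{(1)}_i\otimes\cdots\otimes\mathbf a^{(k)}_i$ of the type defining $P_s(\mathbf n,r)$ in which the factor matrices $A^{(l)}=[\mathbf a^{(l)}_1,\dots,\mathbf a^{(l)}_r]$, $l=s+1,\dots,k$, have full column rank, then $\mathcal A$ is identifiable. Moreover, if $s\ge3$, then every tensor in $P_s(\mathbf n,r)$ is identifiable.
   Context: $P_s(\mathbf n,r)$ is the set of tensors $\sum_{i=1}^r\sigma_i\mathbf a^{(1)}_i\otimes\cdots\otimes\mathbf a^{(k)}_i$ with $\sigma_i\in\mathbb R$, all $\mathbf a^{(l)}_i\in\mathbb R^{n_l}$ unit vectors, and for each $l\le s$ the vectors $\mathbf a^{(l)}_1,\dots,\mathbf a^{(l)}_r$ pairwise orthogonal. The rank of a tensor is the least $m$ such that it is a sum of $m$ rank-one tensors $\lambda_j\mathbf u^{(1)}_j\otimes\cdots\otimes\mathbf u^{(k)}_j$; a rank decomposition uses exactly the rank many terms. A tensor is identifiable if its rank decomposition is essentially unique: any two rank decompositions $\sum_j\lambda_j\mathbf u^{(1)}_j\otimes\cdots\otimes\mathbf u^{(k)}_j=\sum_j\mu_j\mathbf v^{(1)}_j\otimes\cdots\otimes\mathbf v^{(k)}_j$ differ by a permutation $\sigma$ of the terms and nonzero rescalings $\mathbf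 v^{(i)}_{\sigma(j)}=\alpha^{(i)}_j\mathbf u^{(i)}_j$ with $(\prod_i\alpha^{(i)}_j)\mu_{\sigma(j)}=\lambda_j$. *)

theory Defs
  imports Complex_Main "HOL-Combinatorics.Permutations"
begin

text \<open>The order-k tensor is indexed by modes 0,...,k-1 (mode l+1 of the
paper is mode l here). A vector of R^(n l) is a function nat => real vanishing
outside {0..<n l}. A tensor of size n 0 x ... x n (k-1) is a function on multi-indices
(nat => nat) => real; all tensors considered are finite sums of rank-one tensors whose
factor vectors lie in the respective R^(n l), so equality of such functions is equality
of tensors. A family of r terms with factors is given by u :: nat => nat => nat => real,
where u j l is the mode-l factor vector of term j.\<close>

definition in_Rn :: "nat \<Rightarrow> (nat \<Rightarrow> real) \<Rightarrow> bool" where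
  "in_Rn m v \<longleftrightarrow> (\<forall>x\<ge>m. v x = 0)"

definition ip :: "nat \<Rightarrow> (nat \<Rightarrow> real) \<Rightarrow> (nat \<Rightarrow> real) \<Rightarrow> real" where
  "ip m v w = (\<Sum>x<m. v x * w x)"

definition unit_vec :: "nat \<Rightarrow> (nat \<Rightarrow> real) \<Rightarrow> bool" where
  "unit_vec m v \<longleftrightarrow> in_Rn m v \<and> ip m v v = 1"

definition tsum :: "nat \<Rightarrow> nat \<Rightarrow> (nat \<Rightarrow> real) \<Rightarrow> (nat \<Rightarrow> nat \<Rightarrow> nat \<Rightarrow> real)
    \<Rightarrow> ((nat \<Rightarrow> nat) \<Rightarrow> real)" where
  "tsum k m lam u = (\<lambda>idx. \<Sum>j<m. lam j * (\<Prod>l<k. u j l (idx l)))"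

definition is_decomp :: "nat \<Rightarrow> (nat \<Rightarrow> nat) \<Rightarrow> nat \<Rightarrow> (nat \<Rightarrow> real)
    \<Rightarrow> (nat \<Rightarrow> nat \<Rightarrow> nat \<Rightarrow> real) \<Rightarrow> ((nat \<Rightarrow> nat) \<Rightarrow> real) \<Rightarrow> bool" where
  "is_decomp k n m lam u T \<longleftrightarrow>
     (\<forall>j<m. \<forall>l<k. in_Rn (n l) (u j l)) \<and> T = tsum k m lam u"

definition tensor_rank :: "nat \<Rightarrow> (nat \<Rightarrow> nat) \<Rightarrow> ((nat \<Rightarrow> nat) \<Rightarrow> real) \<Rightarrow> nat" where
  "tensor_rank k n T = (LEAST m. \<exists>lam u. is_decomp k n m lam u T)"

definition identifiable :: "nat \<Rightarrow> (nat \<Rightarrow> nat) \<Rightarrow> ((nat \<Rightarrow> nat) \<Rightarrow> real) \<Rightarrow> bool" where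
  "identifiable k n T \<longleftrightarrow>
    (\<forall>lam u mu v. is_decomp k n (tensor_rank k n T) lam u T \<and>
                  is_decomp k n (tensor_rank k n T) mu v T \<longrightarrow>
      (\<exists>\<sigma> \<alpha>. \<sigma> permutes {..<tensor_rank k n T} \<and>
         (\<forall>j<tensor_rank k n T.
            (\<forall>i<k. \<alpha> j i \<noteq> (0::real) \<and> v (\<sigma> j) i = (\<lambda>x. \<alpha> j i * u j i x)) \<and>
            (\<Prod>i<k. \<alpha> j i) * mu (\<sigma> j) = lam j)))"

definition P_decomp :: "nat \<Rightarrow> (nat \<Rightarrow> nat) \<Rightarrow> nat \<Rightarrow> nat \<Rightarrow> (nat \<Rightarrow> real)
    \<Rightarrow> (nat \<Rightarrow> nat \<Rightarrow> nat \<Rightarrow> real) \<Rightarrow> ((nat \<Rightarrow> nat) \<Rightarrow> real) \<Rightarrow> bool" where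
  "P_decomp k n s r sig a T \<longleftrightarrow>
     (\<forall>i<r. \<forall>l<k. unit_vec (n l) (a i l)) \<and>
     (\<forall>l<s. \<forall>i<r. \<forall>j<r. i \<noteq> j \<longrightarrow> ip (n l) (a i l) (a j l) = 0) \<and>
     T = tsum k r sig a"

definition P_set :: "nat \<Rightarrow> (nat \<Rightarrow> nat) \<Rightarrow> nat \<Rightarrow> nat \<Rightarrow> ((nat \<Rightarrow> nat) \<Rightarrow> real) set" where
  "P_set k n s r = {T. \<exists>sig a. P_decomp k n s r sig a T}"

definition full_col_rank :: "nat \<Rightarrow> nat \<Rightarrow> (nat \<Rightarrow> nat \<Rightarrow> real) \<Rightarrow> bool" where
  "full_col_rank m r c \<longleftrightarrow>
     (\<forall>coef. (\<forall>x<m. (\<Sum>j<r. coef j * c j x) = 0) \<longrightarrow> (\<forall>j<r. coef j = (0::real)))"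

end

theory Submission
  imports Defs "HOL-Library.Function_Algebras"
begin

interpretation fv: vector_space "\<lambda>(c::real) (f::'a\<Rightarrow>real) x. c * f x"
  by unfold_locales (auto simp: fun_eq_iff algebra_simps)

lemma sum_fun_apply: "(\<Sum>i\<in>A. f i) x = (\<Sum>i\<in>A. f i x)" for f :: "'i \<Rightarrow> 'a \<Rightarrow> real"
  by (induction A rule: infinite_finite_induct) auto

definition findep :: "nat \<Rightarrow> (nat \<Rightarrow> 'a \<Rightarrow> real) \<Rightarrow> bool" where
  "findep R f \<longleftrightarrow> (\<forall>c. (\<forall>x. (\<Sum>j<R. c j * f j x) = 0) \<longrightarrow> (\<forall>j<R. c j = 0))"

lemma findepD: "findep R f \<Longrightarrow> (\<And>x. (\<Sum>j<R. c j * f j x) = 0) \<Longrightarrow> j < R \<Longrightarrow> c j = 0"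
  unfolding findep_def by blast

lemma fcrD: "full_col_rank N R b \<Longrightarrow> (\<And>x. x < N \<Longrightarrow> (\<Sum>j<R. c j * b j x) = 0) \<Longrightarrow> j < R \<Longrightarrow> c j = 0"
  unfolding full_col_rank_def by blast

lemma fv_span_iff:
  fixes R :: nat
  shows "(g::'a\<Rightarrow>real) \<in> fv.span (f ` {..<R}) \<longleftrightarrow> (\<exists>c. \<forall>t. g t = (\<Sum>j<R. c j * f j t))"
proof
  let ?S = "{g. \<exists>c. \<forall>t. g t = (\<Sum>j<R. c j * f j t)}"
  have "fv.subspace ?S"
    unfolding fv.subspace_def
  proof (intro conjI ballI allI)
    show "0 \<in> ?S" by (rule CollectI, rule exI[of _ "\<lambda>_. 0"]) simp
  next
    fix x y assume "x \<in> ?S" "y \<in> ?S"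
    then obtain c d where "\<forall>t. x t = (\<Sum>j<R. c j * f j t)" "\<forall>t. y t = (\<Sum>j<R. d j * f j t)" by auto
    then show "x + y \<in> ?S"
      by (intro CollectI exI[of _ "\<lambda>j. c j + d j"]) (simp add: algebra_simps sum.distrib)
  next
    fix a :: real and x assume "x \<in> ?S"
    then obtain c where "\<forall>t. x t = (\<Sum>j<R. c j * f j t)" by auto
    then show "(\<lambda>t. a * x t) \<in> ?S"
      by (intro CollectI exI[of _ "\<lambda>j. a * c j"]) (simp add: sum_distrib_left algebra_simps)
  qed
  moreover have "f ` {..<R} \<subseteq> ?S"
  proof
    fix g assume "g \<in> f ` {..<R}"
    then obtain i where i: "i < R" "g = f i" by auto
    show "g \<in> ?S"
    proof (intro CollectI exI[of _ "\<lambda>j. if j = i then 1 else 0"] allI)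
      fix t
      have "(\<Sum>j<R. (if j = i then 1 else 0) * f j t) = (\<Sum>j<R. if j = i then f j t else 0)"
        by (rule sum.cong) auto
      also have "\<dots> = f i t" using i by (subst sum.delta) auto
      finally show "g t = (\<Sum>j<R. (if j = i then 1 else 0) * f j t)" using i by simp
    qed
  qed
  ultimately have "fv.span (f ` {..<R}) \<subseteq> ?S" using fv.span_minimal by blast
  then show "g \<in> fv.span (f ` {..<R}) \<Longrightarrow> \<exists>c. \<forall>t. g t = (\<Sum>j<R. c j * f j t)" by auto
next
  assume "\<exists>c. \<forall>t. g t = (\<Sum>j<R. c j * f j t)"
  then obtain c where c: "\<forall>t. g t = (\<Sum>j<R. c j * f j t)" by auto
  have "g = (\<Sum>j<R. (\<lambda>t. c j * f j t))" by (simp add: fun_eq_iff sum_fun_apply c)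
  also have "\<dots> \<in> fv.span (f ` {..<R})"
    by (intro fv.span_sum fv.span_scale[of "f _" _ "c _", simplified] fv.span_base) auto
  finally show "g \<in> fv.span (f ` {..<R})" .
qed

lemma findep_indep:
  assumes "findep R (f::nat\<Rightarrow>'a\<Rightarrow>real)"
  shows "inj_on f {..<R}" "fv.independent (f ` {..<R})"
proof -
  show inj: "inj_on f {..<R}"
  proof (rule inj_onI, rule ccontr)
    fix i j assume ij: "i \<in> {..<R}" "j \<in> {..<R}" "f i = f j" "i \<noteq> j"
    define cc where "cc l = (if l = i then 1 else if l = j then -1 else (0::real))" for l
    have "\<forall>x. (\<Sum>l<R. cc l * f l x) = 0"
    proof
      fix x
      have "(\<Sum>l<R. cc l * f l x) = (\<Sum>l<R. (if l = i then f i x else 0) - (if l = j then f j x else 0))"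
        by (rule sum.cong) (use ij in \<open>auto simp: cc_def\<close>)
      also have "\<dots> = (\<Sum>l<R. (if l = i then f i x else 0)) - (\<Sum>l<R. if l = j then f j x else 0)"
        by (rule sum_subtractf)
      also have "\<dots> = 0" using ij by (simp only: sum.delta finite_lessThan)
      finally show "(\<Sum>l<R. cc l * f l x) = 0" .
    qed
    then have "\<forall>l<R. cc l = 0" using assms unfolding findep_def by blast
    then have "cc i = 0" using ij by blast
    then show False by (simp add: cc_def)
  qed
  show "fv.independent (f ` {..<R})"
  proof (rule fv.independent_if_scalars_zero)
    show "finite (f ` {..<R})" by simp
    fix g :: "('a\<Rightarrow>real) \<Rightarrow> real" and x
    assume s: "(\<Sum>x\<in>f ` {..<R}. (\<lambda>t. g x * x t)) = 0" and x: "x \<in> f ` {..<R}"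
    have "\<forall>t. (\<Sum>j<R. g (f j) * f j t) = 0"
    proof
      fix t
      have "(\<Sum>j<R. g (f j) * f j t) = (\<Sum>x\<in>f ` {..<R}. (\<lambda>t. g x * x t)) t"
        by (simp add: sum_fun_apply sum.reindex[OF inj])
      then show "(\<Sum>j<R. g (f j) * f j t) = 0" using s by simp
    qed
    with assms x show "g x = 0" unfolding findep_def by auto
  qed
qed

lemma findep_bound:
  assumes "findep R (w::nat\<Rightarrow>'a\<Rightarrow>real)" "\<forall>j<R. w j \<in> fv.span (W ` {..<m})"
  shows "R \<le> m"
proof -
  have sub: "w ` {..<R} \<subseteq> fv.span (W ` {..<m})" using assms(2) by blast
  have "card (w ` {..<R}) \<le> card (W ` {..<m})"
    using fv.independent_span_bound[OF finite_imageI[OF finite_lessThan] findep_indep(2)[OF assms(1)] sub] by blast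
  also have "\<dots> \<le> m" using card_image_le[of "{..<m}" W] by simp
  finally show ?thesis using card_image[OF findep_indep(1)[OF assms(1)]] by simp
qed

lemma findep_transfer:
  assumes w: "findep R (w::nat\<Rightarrow>'a\<Rightarrow>real)" and sp: "\<forall>j<R. w j \<in> fv.span (W ` {..<R})"
  shows "findep R W" "\<forall>i<R. W i \<in> fv.span (w ` {..<R})"
proof -
  have cw: "card (w ` {..<R}) = R" using card_image[OF findep_indep(1)[OF w]] by simp
  show "findep R W"
    unfolding findep_def
  proof (rule allI, rule impI, rule ccontr)
    fix c assume c: "\<forall>x. (\<Sum>j<R. c j * W j x) = 0" and "\<not> (\<forall>j<R. c j = 0)"
    then obtain i0 where i0: "i0 < R" "c i0 \<noteq> 0" by auto
    let ?A = "{..<R} - {i0}"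
    let ?S = "W ` ?A"
    have W0: "W i0 t = (\<Sum>j\<in>?A. (- c j * inverse (c i0)) * W j t)" for t
    proof -
      have "(\<Sum>j<R. c j * W j t) = c i0 * W i0 t + (\<Sum>j\<in>?A. c j * W j t)"
        by (rule sum.remove) (use i0 in auto)
      then have e: "c i0 * W i0 t = - (\<Sum>j\<in>?A. c j * W j t)" using c by simp
      have "(\<Sum>j\<in>?A. (- c j * inverse (c i0)) * W j t) = - inverse (c i0) * (\<Sum>j\<in>?A. c j * W j t)"
        unfolding sum_distrib_left by (rule sum.cong) simp_all
      also have "\<dots> = inverse (c i0) * (c i0 * W i0 t)" using e by simp
      also have "\<dots> = W i0 t" using i0(2) by simp
      finally show ?thesis by simp
    qed
    have "W i0 = (\<Sum>j\<in>?A. (\<lambda>t. (- c j * inverse (c i0)) * W j t))"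
      by (simp add: fun_eq_iff sum_fun_apply W0)
    also have "\<dots> \<in> fv.span ?S"
      by (intro fv.span_sum fv.span_scale[of "W _" _ "_", simplified] fv.span_base) auto
    finally have Wi0: "W i0 \<in> fv.span ?S" .
    have "W ` {..<R} \<subseteq> fv.span ?S"
    proof
      fix x assume "x \<in> W ` {..<R}"
      then obtain j where j: "j < R" "x = W j" by auto
      show "x \<in> fv.span ?S"
      proof (cases "j = i0")
        case True then show ?thesis using Wi0 j by simp
      next
        case False
        then have "x \<in> ?S" using j by auto
        then show ?thesis by (rule fv.span_base)
      qed
    qed
    then have "fv.span (W ` {..<R}) \<subseteq> fv.span ?S"
      by (rule fv.span_minimal[OF _ fv.subspace_span])
    then have sub: "w ` {..<R} \<subseteq> fv.span ?S" using sp by blast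
    have "card (w ` {..<R}) \<le> card ?S"
      using fv.independent_span_bound[OF finite_imageI[OF finite_Diff[OF finite_lessThan]] findep_indep(2)[OF w] sub] by blast
    also have "\<dots> \<le> card ?A" by (rule card_image_le) simp
    also have "\<dots> = R - 1" using i0 by simp
    finally show False using cw i0 by linarith
  qed
  show "\<forall>i<R. W i \<in> fv.span (w ` {..<R})"
  proof (intro allI impI, rule ccontr)
    fix i assume i: "i < R" "W i \<notin> fv.span (w ` {..<R})"
    have ind: "fv.independent (insert (W i) (w ` {..<R}))"
      by (rule fv.independent_insertI[OF i(2) findep_indep(2)[OF w]])
    have nin: "W i \<notin> w ` {..<R}" using i(2) fv.span_base[of "W i" "w ` {..<R}"] by meson
    have sub: "insert (W i) (w ` {..<R}) \<subseteq> fv.span (W ` {..<R})"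
    proof
      fix x assume "x \<in> insert (W i) (w ` {..<R})"
      then show "x \<in> fv.span (W ` {..<R})"
      proof
        assume "x = W i" then show ?thesis using i(1) by (simp add: fv.span_base)
      next
        assume "x \<in> w ` {..<R}" then show ?thesis using sp by blast
      qed
    qed
    have "card (insert (W i) (w ` {..<R})) \<le> card (W ` {..<R})"
      using fv.independent_span_bound[OF finite_imageI[OF finite_lessThan] ind sub] by blast
    also have "\<dots> \<le> R" using card_image_le[of "{..<R}" W] by simp
    finally show False using cw nin by (simp add: card_insert_disjoint)
  qed
qed

definition tp :: "(nat\<Rightarrow>nat\<Rightarrow>nat\<Rightarrow>real) \<Rightarrow> nat \<Rightarrow> nat \<Rightarrow> nat \<Rightarrow> (nat\<Rightarrow>nat) \<Rightarrow> real" where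
  "tp u j a k idx = (\<Prod>l\<in>{a..<k}. u j l (idx l))"

lemma tp_upd: "b < a \<Longrightarrow> tp u j a k (idx(b:=x)) = tp u j a k idx"
  unfolding tp_def by (rule prod.cong) auto

lemma tp_split: "a < k \<Longrightarrow> tp u j a k idx = u j a (idx a) * tp u j (Suc a) k idx"
  unfolding tp_def by (simp add: prod.atLeast_Suc_lessThan)

lemma tsum_split: "1 \<le> k \<Longrightarrow> tsum k m lam u idx = (\<Sum>j<m. lam j * u j 0 (idx 0) * tp u j 1 k idx)"
  unfolding tsum_def using tp_split[of 0 k u _ idx]
  by (simp add: lessThan_atLeast0 mult.assoc tp_def)

lemma findep_nz: "findep R f \<Longrightarrow> i < R \<Longrightarrow> \<exists>x. f i x \<noteq> 0"
proof (rule ccontr)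
  assume f: "findep R f" and i: "i < R" and "\<not> (\<exists>x. f i x \<noteq> 0)"
  then have z: "\<forall>x. f i x = 0" by auto
  have "\<forall>x. (\<Sum>j<R. (if j = i then 1 else 0) * f j x) = 0"
  proof
    fix x
    have "(\<Sum>j<R. (if j = i then 1 else 0) * f j x) = (\<Sum>j<R. if j = i then f j x else 0)"
      by (rule sum.cong) auto
    then show "(\<Sum>j<R. (if j = i then 1 else 0) * f j x) = 0" using z by simp
  qed
  then have "(if i = i then 1 else 0::real) = 0"
    by (intro findepD[where c="\<lambda>j. if j = i then 1 else 0", OF f _ i]) blast
  then show False by simp
qed

lemma findep_perm:
  assumes s: "bij_betw \<sigma> {..<R} {..<R}" and w: "findep R w"
  shows "findep R (\<lambda>i. w (\<sigma> i))"
  unfolding findep_def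
proof (intro allI impI)
  fix c i assume c: "\<forall>x. (\<Sum>j<R. c j * w (\<sigma> j) x) = 0" and i: "i < R"
  let ?c = "\<lambda>j. c (inv_into {..<R} \<sigma> j)"
  have "\<forall>x. (\<Sum>j<R. ?c j * w j x) = 0"
  proof
    fix x
    have "(\<Sum>j<R. ?c j * w j x) = (\<Sum>j<R. ?c (\<sigma> j) * w (\<sigma> j) x)"
      using sum.reindex_bij_betw[OF s, of "\<lambda>j. ?c j * w j x"] by simp
    also have "\<dots> = (\<Sum>j<R. c j * w (\<sigma> j) x)"
      by (rule sum.cong) (use bij_betw_imp_inj_on[OF s] in auto)
    finally show "(\<Sum>j<R. ?c j * w j x) = 0" using c by simp
  qed
  then have "\<forall>j<R. ?c j = 0" using findepD[where c="?c", OF w] by blast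
  moreover have "\<sigma> i < R" using s i by (auto simp: bij_betw_def)
  ultimately have "?c (\<sigma> i) = 0" by blast
  moreover have "inv_into {..<R} \<sigma> (\<sigma> i) = i"
    by (rule inv_into_f_f[OF bij_betw_imp_inj_on[OF s]]) (use i in simp)
  ultimately show "c i = 0" by simp
qed

lemma tp_indep:
  assumes a: "a < k" and fcr: "full_col_rank N R (\<lambda>j. u j a)"
    and nz: "\<forall>j<R. \<forall>l. a < l \<and> l < k \<longrightarrow> (\<exists>x. u j l x \<noteq> 0)"
  shows "findep R (\<lambda>j. tp u j a k)"
  unfolding findep_def
proof (intro allI impI)
  fix c j0 assume eq: "\<forall>x. (\<Sum>j<R. c j * tp u j a k x) = 0" and j0: "j0 < R"
  define idx0 where "idx0 = (\<lambda>l. SOME x. u j0 l x \<noteq> 0)"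
  have "\<forall>l\<in>{Suc a..<k}. u j0 l (idx0 l) \<noteq> 0"
  proof
    fix l assume "l \<in> {Suc a..<k}"
    then have "\<exists>x. u j0 l x \<noteq> 0" using nz j0 by auto
    then show "u j0 l (idx0 l) \<noteq> 0" unfolding idx0_def by (rule someI_ex)
  qed
  then have "tp u j0 (Suc a) k idx0 \<noteq> 0" unfolding tp_def by simp
  moreover have "\<forall>x<N. (\<Sum>j<R. (c j * tp u j (Suc a) k idx0) * u j a x) = 0"
  proof (intro allI impI)
    fix x
    have "(\<Sum>j<R. (c j * tp u j (Suc a) k idx0) * u j a x) = (\<Sum>j<R. c j * tp u j a k (idx0(a:=x)))"
      by (rule sum.cong) (simp_all add: tp_split[OF a] tp_upd)
    then show "(\<Sum>j<R. (c j * tp u j (Suc a) k idx0) * u j a x) = 0" using eq by simp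
  qed
  then have "c j0 * tp u j0 (Suc a) k idx0 = 0"
    by (intro fcrD[where c="\<lambda>j. c j * tp u j (Suc a) k idx0", OF fcr _ j0]) blast
  ultimately show "c j0 = 0" by simp
qed

lemma contract0:
  assumes k: "1 \<le> k"
    and orth: "\<forall>i<R. \<forall>j<R. ip (n 0) (u i 0) (u j 0) = (if i = j then 1 else 0)"
    and eq: "tsum k R lam u = tsum k m mu v" and j: "j < R"
  shows "lam j * tp u j 1 k idx = (\<Sum>i<m. (mu i * ip (n 0) (u j 0) (v i 0)) * tp v i 1 k idx)"
proof -
  have gen: "(\<Sum>x<n 0. u j 0 x * tsum k m' lam' w (idx(0:=x)))
      = (\<Sum>i<m'. (lam' i * ip (n 0) (u j 0) (w i 0)) * tp w i 1 k idx)" for m' lam' w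
  proof -
    have "(\<Sum>x<n 0. u j 0 x * tsum k m' lam' w (idx(0:=x)))
        = (\<Sum>x<n 0. \<Sum>i<m'. u j 0 x * (lam' i * w i 0 x * tp w i 1 k idx))"
      by (simp add: tsum_split[OF k] tp_upd sum_distrib_left ac_simps)
    also have "\<dots> = (\<Sum>i<m'. \<Sum>x<n 0. u j 0 x * (lam' i * w i 0 x * tp w i 1 k idx))"
      by (rule sum.swap)
    also have "\<dots> = (\<Sum>i<m'. (lam' i * ip (n 0) (u j 0) (w i 0)) * tp w i 1 k idx)"
      unfolding ip_def sum_distrib_left sum_distrib_right
      by (rule sum.cong[OF refl], rule sum.cong[OF refl]) (simp add: mult_ac)
    finally show ?thesis .
  qed
  have "(\<Sum>i<R. (lam i * ip (n 0) (u j 0) (u i 0)) * tp u i 1 k idx)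
      = (\<Sum>i<R. if i = j then lam j * tp u j 1 k idx else 0)"
    by (rule sum.cong) (use orth j in auto)
  also have "\<dots> = lam j * tp u j 1 k idx" using j by simp
  finally show ?thesis using gen[of R lam u] gen[of m mu v] eq by simp
qed

lemma rank_one_span:
  assumes z: "findep R z" and b: "full_col_rank N R b"
    and zc: "\<forall>j<R. \<forall>idx y. z j (idx(1:=y)) = z j idx" and Zc: "\<forall>idx y. Z (idx(1:=y)) = Z idx"
    and W: "\<forall>idx. q (idx 1) * Z idx = (\<Sum>j<R. c j * (b j (idx 1) * z j idx))"
    and nz: "\<exists>idx. q (idx 1) * Z idx \<noteq> 0"
  shows "\<exists>j<R. c j \<noteq> 0 \<and> (\<forall>j'<R. j' \<noteq> j \<longrightarrow> c j' = 0)"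
proof -
  obtain idx0 where i0: "q (idx0 1) * Z idx0 \<noteq> 0" using nz by auto
  define y0 where "y0 = idx0 1"
  have qy0: "q y0 \<noteq> 0" using i0 y0_def by auto
  define \<kappa> where "\<kappa> j = c j * b j y0 / q y0" for j
  have Zrep: "Z idx = (\<Sum>j<R. \<kappa> j * z j idx)" for idx
  proof -
    have "q y0 * Z idx = q y0 * Z (idx(1:=y0))" using Zc by simp
    also have "\<dots> = (\<Sum>j<R. c j * (b j y0 * z j (idx(1:=y0))))" using W[rule_format, of "idx(1:=y0)"] by simp
    also have "\<dots> = (\<Sum>j<R. c j * (b j y0 * z j idx))" by (rule sum.cong) (use zc in auto)
    finally have "Z idx = (\<Sum>j<R. c j * (b j y0 * z j idx)) / q y0" using qy0 by (simp add: field_simps)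
    also have "\<dots> = (\<Sum>j<R. \<kappa> j * z j idx)" by (simp add: \<kappa>_def sum_divide_distrib mult.assoc)
    finally show ?thesis .
  qed
  have key: "\<forall>j<R. c j * b j y = q y * \<kappa> j" for y
  proof -
    have "\<forall>idx. (\<Sum>j<R. (c j * b j y - q y * \<kappa> j) * z j idx) = 0"
    proof
      fix idx
      have "(\<Sum>j<R. (c j * b j y - q y * \<kappa> j) * z j idx)
          = (\<Sum>j<R. c j * (b j y * z j idx)) - q y * (\<Sum>j<R. \<kappa> j * z j idx)"
        by (simp add: algebra_simps sum_subtractf sum_distrib_left)
      also have "(\<Sum>j<R. c j * (b j y * z j idx)) = (\<Sum>j<R. c j * (b j y * z j (idx(1:=y))))"
        by (rule sum.cong) (use zc in auto)
      also have "\<dots> = q y * Z (idx(1:=y))" using W[rule_format, of "idx(1:=y)"] by simp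
      also have "\<dots> = q y * Z idx" using Zc by simp
      finally show "(\<Sum>j<R. (c j * b j y - q y * \<kappa> j) * z j idx) = 0" using Zrep by simp
    qed
    with z show ?thesis unfolding findep_def by auto
  qed
  have ex: "\<exists>j<R. c j \<noteq> 0"
  proof (rule ccontr)
    assume "\<not> (\<exists>j<R. c j \<noteq> 0)"
    then have "(\<Sum>j<R. c j * (b j (idx0 1) * z j idx0)) = 0" by simp
    with W i0 show False by simp
  qed
  then obtain j1 where j1: "j1 < R" "c j1 \<noteq> 0" by auto
  have "\<forall>j'<R. j' \<noteq> j1 \<longrightarrow> c j' = 0"
  proof (intro allI impI, rule ccontr)
    fix j2 assume j2: "j2 < R" "j2 \<noteq> j1" "c j2 \<noteq> 0"
    define co where "co j = (if j = j1 then \<kappa> j2 / c j2 else if j = j2 then - \<kappa> j1 / c j1 else 0)" for j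
    have b1: "b j1 y = q y * \<kappa> j1 / c j1" for y using key[of y] j1 by (simp add: field_simps)
    have b2: "b j2 y = q y * \<kappa> j2 / c j2" for y using key[of y] j2 by (simp add: field_simps)
    have "\<forall>x<N. (\<Sum>j<R. co j * b j x) = 0"
    proof (intro allI impI)
      fix x
      have "(\<Sum>j<R. co j * b j x) = (\<Sum>j<R. (if j = j1 then \<kappa> j2 / c j2 * b j1 x else 0)
             + (if j = j2 then - \<kappa> j1 / c j1 * b j2 x else 0))"
        by (rule sum.cong) (use j2 in \<open>auto simp: co_def\<close>)
      also have "\<dots> = \<kappa> j2 / c j2 * b j1 x - \<kappa> j1 / c j1 * b j2 x"
        using j1 j2 by (simp add: sum.distrib)
      also have "\<dots> = 0" by (simp add: b1 b2)
      finally show "(\<Sum>j<R. co j * b j x) = 0" .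
    qed
    then have "co j1 = 0" using b j1 unfolding full_col_rank_def by blast
    then have k2: "\<kappa> j2 = 0" using j2 by (simp add: co_def)
    define e where "e j = (if j = j2 then 1 else (0::real))" for j
    have "\<forall>x<N. (\<Sum>j<R. e j * b j x) = 0"
    proof (intro allI impI)
      fix x
      have "(\<Sum>j<R. e j * b j x) = (\<Sum>j<R. if j = j2 then b j2 x else 0)"
        by (rule sum.cong) (auto simp: e_def)
      also have "\<dots> = 0" using j2 by (simp add: b2 k2)
      finally show "(\<Sum>j<R. e j * b j x) = 0" .
    qed
    then have "e j2 = 0" using b j2 unfolding full_col_rank_def by blast
    then show False by (simp add: e_def)
  qed
  with j1 show ?thesis by blast
qed

lemma rank_one_factors:
  fixes x y :: "nat \<Rightarrow> nat \<Rightarrow> real" and S :: "nat set"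
  assumes S: "finite S" and c: "c \<noteq> 0" and ny: "\<forall>l\<in>S. \<exists>t. y l t \<noteq> 0"
    and eq: "\<forall>idx. (\<Prod>l\<in>S. x l (idx l)) = c * (\<Prod>l\<in>S. y l (idx l))"
  shows "\<exists>\<beta>. (\<forall>l\<in>S. \<beta> l \<noteq> 0 \<and> x l = (\<lambda>t. \<beta> l * y l t)) \<and> (\<Prod>l\<in>S. \<beta> l) = c"
proof -
  define idx0 where "idx0 = (\<lambda>l. SOME t. y l t \<noteq> 0)"
  have y0: "y l (idx0 l) \<noteq> 0" if "l \<in> S" for l
    unfolding idx0_def using ny that by (metis (mono_tags, lifting) someI_ex)
  have Q: "(\<Prod>l\<in>S. y l (idx0 l)) \<noteq> 0" by (subst prod_zero_iff[OF S]) (use y0 in blast)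
  have P: "(\<Prod>l\<in>S. x l (idx0 l)) \<noteq> 0" using eq Q c by simp
  have x0: "x l (idx0 l) \<noteq> 0" if "l \<in> S" for l using P S that by (simp add: prod_zero_iff) 
  define \<beta> where "\<beta> l = x l (idx0 l) / y l (idx0 l)" for l
  have "\<forall>l\<in>S. \<beta> l \<noteq> 0 \<and> x l = (\<lambda>t. \<beta> l * y l t)"
  proof
    fix l assume l: "l \<in> S"
    let ?P' = "\<Prod>l'\<in>S - {l}. x l' (idx0 l')" and ?Q' = "\<Prod>l'\<in>S - {l}. y l' (idx0 l')"
    have e1: "x l t * ?P' = c * (y l t * ?Q')" for t
    proof -
      have "(\<Prod>l'\<in>S. x l' ((idx0(l:=t)) l')) = x l t * (\<Prod>l'\<in>S - {l}. x l' ((idx0(l:=t)) l'))"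
        using S l by (simp add: prod.remove)
      also have "(\<Prod>l'\<in>S - {l}. x l' ((idx0(l:=t)) l')) = ?P'" by (rule prod.cong) auto
      finally have A: "(\<Prod>l'\<in>S. x l' ((idx0(l:=t)) l')) = x l t * ?P'" .
      have "(\<Prod>l'\<in>S. y l' ((idx0(l:=t)) l')) = y l t * (\<Prod>l'\<in>S - {l}. y l' ((idx0(l:=t)) l'))"
        using S l by (simp add: prod.remove)
      also have "(\<Prod>l'\<in>S - {l}. y l' ((idx0(l:=t)) l')) = ?Q'" by (rule prod.cong) auto
      finally have B: "(\<Prod>l'\<in>S. y l' ((idx0(l:=t)) l')) = y l t * ?Q'" .
      show ?thesis using eq[rule_format, of "idx0(l:=t)"] A B by simp
    qed
    have P'0: "?P' \<noteq> 0" by (subst prod_zero_iff) (use x0 S in auto)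
    have K1: "x l t = (c * ?Q' / ?P') * y l t" for t
    proof -
      have "x l t * ?P' = c * (y l t * ?Q')" by (rule e1)
      then have "x l t = c * (y l t * ?Q') / ?P'" using P'0 by (simp add: eq_divide_eq)
      then show ?thesis by simp
    qed
    have bK: "\<beta> l = c * ?Q' / ?P'"
      unfolding \<beta>_def using K1[of "idx0 l"] y0[OF l] by simp
    have xe: "x l t = \<beta> l * y l t" for t using K1[of t] bK by simp
    have "\<beta> l \<noteq> 0" unfolding \<beta>_def using x0[OF l] y0[OF l] by simp
    moreover have "x l = (\<lambda>t. \<beta> l * y l t)" by (rule ext) (rule xe)
    ultimately show "\<beta> l \<noteq> 0 \<and> x l = (\<lambda>t. \<beta> l * y l t)" by blast
  qed
  moreover have "(\<Prod>l\<in>S. \<beta> l) = c"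
    using eq[rule_format, of idx0] Q by (simp add: \<beta>_def prod_dividef)
  ultimately show ?thesis by blast
qed

lemma tp1: "3 \<le> k \<Longrightarrow> tp u j 1 k idx = u j 1 (idx 1) * tp u j 2 k idx"
  using tp_split[of 1 k u j idx] by (simp add: numeral_2_eq_2)

lemma choice_lt: "\<forall>i<R. \<exists>b. P i b \<Longrightarrow> \<exists>B. \<forall>i<R. P i (B i)"
  using choice[of "\<lambda>i b. i < R \<longrightarrow> P i b"] by blast

locale keyctx =
  fixes k R :: nat and n :: "nat \<Rightarrow> nat" and lam :: "nat \<Rightarrow> real" and u :: "nat \<Rightarrow> nat \<Rightarrow> nat \<Rightarrow> real"
  assumes k3: "3 \<le> k" and lam: "\<forall>i<R. lam i \<noteq> 0"
    and inr: "\<forall>i<R. \<forall>l<k. in_Rn (n l) (u i l)"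
    and nzv: "\<forall>i<R. \<forall>l<k. \<exists>x. u i l x \<noteq> 0"
    and orth: "\<forall>i<R. \<forall>j<R. ip (n 0) (u i 0) (u j 0) = (if i = j then 1 else 0)"
    and f1: "full_col_rank (n 1) R (\<lambda>j. u j 1)"
    and f2: "full_col_rank (n 2) R (\<lambda>j. u j 2)"
begin

lemma w_indep: "findep R (\<lambda>j. tp u j 1 k)"
  by (rule tp_indep[of 1 k "n 1" R u]) (use k3 f1 nzv in auto)

lemma z_indep: "findep R (\<lambda>j. tp u j 2 k)"
  by (rule tp_indep[of 2 k "n 2" R u]) (use k3 f2 nzv in auto)

lemma w_span:
  assumes d: "is_decomp k n m mu v (tsum k R lam u)"
  shows "\<forall>j<R. tp u j 1 k \<in> fv.span ((\<lambda>i. tp v i 1 k) ` {..<m})"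
proof (intro allI impI)
  fix j assume j: "j < R"
  have eq: "tsum k R lam u = tsum k m mu v" using d unfolding is_decomp_def by simp
  have rep: "\<forall>t. tp u j 1 k t = (\<Sum>i<m. (mu i * ip (n 0) (u j 0) (v i 0) / lam j) * tp v i 1 k t)"
  proof
    fix t
    have "lam j * tp u j 1 k t = (\<Sum>i<m. (mu i * ip (n 0) (u j 0) (v i 0)) * tp v i 1 k t)"
      using contract0[of k R n u lam m mu v j t] k3 orth eq j by simp
    then show "tp u j 1 k t = (\<Sum>i<m. (mu i * ip (n 0) (u j 0) (v i 0) / lam j) * tp v i 1 k t)"
      using lam j by (simp add: field_simps sum_divide_distrib[symmetric])
  qed
  show "tp u j 1 k \<in> fv.span ((\<lambda>i. tp v i 1 k) ` {..<m})"
    unfolding fv_span_iff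
    by (rule exI[where x="\<lambda>i. mu i * ip (n 0) (u j 0) (v i 0) / lam j"]) (use rep in simp)
qed

lemma lower: "is_decomp k n m mu v (tsum k R lam u) \<Longrightarrow> R \<le> m"
  using findep_bound[OF w_indep w_span] by blast

lemma own_decomp: "is_decomp k n R lam u (tsum k R lam u)"
  using inr unfolding is_decomp_def by auto

lemma rank_eq: "tensor_rank k n (tsum k R lam u) = R"
  unfolding tensor_rank_def
  by (rule Least_equality) (use own_decomp lower in blast)+

lemma uniq:
  assumes d: "is_decomp k n R mu v (tsum k R lam u)"
  shows "\<exists>\<sigma>. bij_betw \<sigma> {..<R} {..<R} \<and> (\<forall>i<R. \<exists>\<beta>. (\<forall>l<k. \<beta> l \<noteq> 0 \<and> v i l = (\<lambda>x. \<beta> l * u (\<sigma> i) l x))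
            \<and> mu i * (\<Prod>l<k. \<beta> l) = lam (\<sigma> i))"
proof -
  define w where "w j = tp u j 1 k" for j
  define W where "W i = tp v i 1 k" for i
  have eq: "tsum k R lam u = tsum k R mu v" using d unfolding is_decomp_def by simp
  have wi: "findep R w" using w_indep unfolding w_def .
  have sp: "\<forall>j<R. w j \<in> fv.span (W ` {..<R})" using w_span[OF d] unfolding w_def W_def .
  have Wi: "findep R W" and Wsp: "\<forall>i<R. W i \<in> fv.span (w ` {..<R})"
    using findep_transfer[OF wi sp] by auto
  have "\<forall>i<R. \<exists>c. \<forall>t. W i t = (\<Sum>j<R. c j * w j t)" using Wsp unfolding fv_span_iff by blast
  then obtain C where C: "\<forall>i<R. \<forall>t. W i t = (\<Sum>j<R. C i j * w j t)"
    using choice_lt[of R "\<lambda>i c. \<forall>t. W i t = (\<Sum>j<R. c j * w j t)"] by blast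
  have "\<forall>i<R. \<exists>j<R. C i j \<noteq> 0 \<and> (\<forall>j'<R. j' \<noteq> j \<longrightarrow> C i j' = 0)"
  proof (intro allI impI)
    fix i assume i: "i < R"
    show "\<exists>j<R. C i j \<noteq> 0 \<and> (\<forall>j'<R. j' \<noteq> j \<longrightarrow> C i j' = 0)"
    proof (rule rank_one_span[OF z_indep f1, where q = "v i 1" and Z = "tp v i 2 k"])
      show "\<forall>j<R. \<forall>idx y. tp u j 2 k (idx(1 := y)) = tp u j 2 k idx" by (simp add: tp_upd)
      show "\<forall>idx y. tp v i 2 k (idx(1 := y)) = tp v i 2 k idx" by (simp add: tp_upd)
      show "\<forall>idx. v i 1 (idx 1) * tp v i 2 k idx = (\<Sum>j<R. C i j * (u j 1 (idx 1) * tp u j 2 k idx))"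
        using C i unfolding W_def w_def tp1[OF k3] by simp
      show "\<exists>idx. v i 1 (idx 1) * tp v i 2 k idx \<noteq> 0"
        using findep_nz[OF Wi i] unfolding W_def tp1[OF k3] by simp
    qed
  qed
  then obtain \<sigma> where sg: "\<forall>i<R. \<sigma> i < R \<and> C i (\<sigma> i) \<noteq> 0 \<and> (\<forall>j'<R. j' \<noteq> \<sigma> i \<longrightarrow> C i j' = 0)"
    using choice_lt[of R "\<lambda>i j. j < R \<and> C i j \<noteq> 0 \<and> (\<forall>j'<R. j' \<noteq> j \<longrightarrow> C i j' = 0)"] by blast
  define c where "c i = C i (\<sigma> i)" for i
  have Wc: "W i t = c i * w (\<sigma> i) t" if i: "i < R" for i t
  proof -
    have "W i t = (\<Sum>j<R. C i j * w j t)" using C i by simp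
    also have "\<dots> = (\<Sum>j<R. if j = \<sigma> i then c i * w (\<sigma> i) t else 0)"
      by (rule sum.cong) (use sg i in \<open>auto simp: c_def\<close>)
    also have "\<dots> = c i * w (\<sigma> i) t" using sg i by simp
    finally show ?thesis .
  qed
  have c0: "c i \<noteq> 0" if "i < R" for i using sg that by (simp add: c_def)
  have inj: "inj_on \<sigma> {..<R}"
  proof (rule inj_onI, rule ccontr)
    fix i1 i2 assume i: "i1 \<in> {..<R}" "i2 \<in> {..<R}" "\<sigma> i1 = \<sigma> i2" "i1 \<noteq> i2"
    define co where "co i = (if i = i1 then c i2 else if i = i2 then - c i1 else 0)" for i
    have "\<forall>t. (\<Sum>i<R. co i * W i t) = 0"
    proof
      fix t
      have "(\<Sum>i<R. co i * W i t) = (\<Sum>i<R. (if i = i1 then c i2 * W i1 t else 0) + (if i = i2 then - c i1 * W i2 t else 0))"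
        by (rule sum.cong) (use i in \<open>auto simp: co_def\<close>)
      also have "\<dots> = c i2 * W i1 t - c i1 * W i2 t" using i by (simp add: sum.distrib)
      also have "\<dots> = 0" using i by (simp add: Wc)
      finally show "(\<Sum>i<R. co i * W i t) = 0" .
    qed
    then have "co i1 = 0" using Wi i unfolding findep_def by blast
    then show False using c0 i by (simp add: co_def)
  qed
  have bij: "bij_betw \<sigma> {..<R} {..<R}"
    unfolding bij_betw_def using inj endo_inj_surj[of "{..<R}" \<sigma>] sg by auto
  have m0: "mu i * c i * v i 0 x = lam (\<sigma> i) * u (\<sigma> i) 0 x" if i: "i < R" for i x
  proof -
    have "findep R (\<lambda>i. w (\<sigma> i))" by (rule findep_perm[OF bij wi])
    moreover have "\<forall>t. (\<Sum>i<R. (mu i * c i * v i 0 x - lam (\<sigma> i) * u (\<sigma> i) 0 x) * w (\<sigma> i) t) = 0"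
    proof
      fix t :: "nat \<Rightarrow> nat"
      let ?t = "t(0:=x)"
      have "tsum k R mu v ?t = (\<Sum>i<R. mu i * v i 0 x * W i ?t)"
        using k3 by (simp add: tsum_split W_def)
      also have "\<dots> = (\<Sum>i<R. mu i * c i * v i 0 x * w (\<sigma> i) t)"
        by (rule sum.cong) (simp_all add: Wc w_def tp_upd)
      finally have A: "tsum k R mu v ?t = (\<Sum>i<R. mu i * c i * v i 0 x * w (\<sigma> i) t)" .
      have "tsum k R lam u ?t = (\<Sum>j<R. lam j * u j 0 x * w j t)"
        using k3 by (simp add: tsum_split w_def tp_upd)
      also have "\<dots> = (\<Sum>i<R. lam (\<sigma> i) * u (\<sigma> i) 0 x * w (\<sigma> i) t)"
        using sum.reindex_bij_betw[OF bij, of "\<lambda>j. lam j * u j 0 x * w j t"] by simp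
      finally have B: "tsum k R lam u ?t = (\<Sum>i<R. lam (\<sigma> i) * u (\<sigma> i) 0 x * w (\<sigma> i) t)" .
      show "(\<Sum>i<R. (mu i * c i * v i 0 x - lam (\<sigma> i) * u (\<sigma> i) 0 x) * w (\<sigma> i) t) = 0"
        using A B eq by (simp add: algebra_simps sum_subtractf)
    qed
    ultimately show ?thesis using i unfolding findep_def by auto
  qed
  have "\<forall>i<R. \<exists>\<beta>. (\<forall>l<k. \<beta> l \<noteq> 0 \<and> v i l = (\<lambda>x. \<beta> l * u (\<sigma> i) l x))
            \<and> mu i * (\<Prod>l<k. \<beta> l) = lam (\<sigma> i)"
  proof (intro allI impI)
    fix i assume i: "i < R"
    have si: "\<sigma> i < R" using sg i by simp
    obtain \<beta> where \<beta>: "\<forall>l\<in>{1..<k}. \<beta> l \<noteq> 0 \<and> v i l = (\<lambda>t. \<beta> l * u (\<sigma> i) l t)"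
      and p\<beta>: "(\<Prod>l\<in>{1..<k}. \<beta> l) = c i"
    proof -
      have "\<exists>\<beta>. (\<forall>l\<in>{1..<k}. \<beta> l \<noteq> 0 \<and> v i l = (\<lambda>t. \<beta> l * u (\<sigma> i) l t)) \<and> (\<Prod>l\<in>{1..<k}. \<beta> l) = c i"
      proof (rule rank_one_factors)
        show "finite {1..<k}" by simp
        show "c i \<noteq> 0" using c0 i .
        show "\<forall>l\<in>{1..<k}. \<exists>t. u (\<sigma> i) l t \<noteq> 0" using nzv si by auto
        show "\<forall>idx. (\<Prod>l\<in>{1..<k}. v i l (idx l)) = c i * (\<Prod>l\<in>{1..<k}. u (\<sigma> i) l (idx l))"
          using Wc[OF i] unfolding W_def w_def tp_def by simp
      qed
      then show ?thesis using that by blast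
    qed
    obtain x0 where x0: "u (\<sigma> i) 0 x0 \<noteq> 0" using nzv si k3 by fastforce
    have mu0: "mu i \<noteq> 0" using m0[OF i, of x0] x0 lam si by auto
    define \<beta>' where "\<beta>' = \<beta>(0 := lam (\<sigma> i) / (mu i * c i))"
    have "\<forall>l<k. \<beta>' l \<noteq> 0 \<and> v i l = (\<lambda>x. \<beta>' l * u (\<sigma> i) l x)"
    proof (intro allI impI)
      fix l assume l: "l < k"
      show "\<beta>' l \<noteq> 0 \<and> v i l = (\<lambda>x. \<beta>' l * u (\<sigma> i) l x)"
      proof (cases "l = 0")
        case True
        have "v i 0 x = lam (\<sigma> i) / (mu i * c i) * u (\<sigma> i) 0 x" for x
          using m0[OF i, of x] mu0 c0[OF i] by (simp add: field_simps)
        then show ?thesis using True lam si mu0 c0[OF i] by (auto simp: \<beta>'_def fun_eq_iff)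
      next
        case False
        then show ?thesis using \<beta> l by (simp add: \<beta>'_def)
      qed
    qed
    moreover have "mu i * (\<Prod>l<k. \<beta>' l) = lam (\<sigma> i)"
    proof -
      have "(\<Prod>l<k. \<beta>' l) = \<beta>' 0 * (\<Prod>l\<in>{1..<k}. \<beta>' l)"
        using k3 by (simp add: lessThan_atLeast0 prod.atLeast_Suc_lessThan)
      also have "(\<Prod>l\<in>{1..<k}. \<beta>' l) = c i" using p\<beta> by (simp add: \<beta>'_def)
      finally show ?thesis using mu0 c0[OF i] by (simp add: \<beta>'_def)
    qed
    ultimately show "\<exists>\<beta>. (\<forall>l<k. \<beta> l \<noteq> 0 \<and> v i l = (\<lambda>x. \<beta> l * u (\<sigma> i) l x))
            \<and> mu i * (\<Prod>l<k. \<beta> l) = lam (\<sigma> i)" by blast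
  qed
  with bij show ?thesis by blast
qed

end

context keyctx begin

lemma ident: "identifiable k n (tsum k R lam u)"
  unfolding identifiable_def rank_eq
proof (intro allI impI)
  fix lam' u' mu v
  assume "is_decomp k n R lam' u' (tsum k R lam u) \<and> is_decomp k n R mu v (tsum k R lam u)"
  then have d1: "is_decomp k n R lam' u' (tsum k R lam u)" and d2: "is_decomp k n R mu v (tsum k R lam u)" by auto
  obtain \<sigma>1 where b1: "bij_betw \<sigma>1 {..<R} {..<R}" and s1: "\<forall>i<R. \<exists>\<beta>. (\<forall>l<k. \<beta> l \<noteq> 0 \<and> u' i l = (\<lambda>x. \<beta> l * u (\<sigma>1 i) l x))
            \<and> lam' i * (\<Prod>l<k. \<beta> l) = lam (\<sigma>1 i)" using uniq[OF d1] by blast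
  obtain \<sigma>2 where b2: "bij_betw \<sigma>2 {..<R} {..<R}" and s2: "\<forall>i<R. \<exists>\<beta>. (\<forall>l<k. \<beta> l \<noteq> 0 \<and> v i l = (\<lambda>x. \<beta> l * u (\<sigma>2 i) l x))
            \<and> mu i * (\<Prod>l<k. \<beta> l) = lam (\<sigma>2 i)" using uniq[OF d2] by blast
  obtain B1 where B1: "\<forall>i<R. (\<forall>l<k. B1 i l \<noteq> 0 \<and> u' i l = (\<lambda>x. B1 i l * u (\<sigma>1 i) l x))
            \<and> lam' i * (\<Prod>l<k. B1 i l) = lam (\<sigma>1 i)" using choice_lt[OF s1] by blast
  obtain B2 where B2: "\<forall>i<R. (\<forall>l<k. B2 i l \<noteq> 0 \<and> v i l = (\<lambda>x. B2 i l * u (\<sigma>2 i) l x))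
            \<and> mu i * (\<Prod>l<k. B2 i l) = lam (\<sigma>2 i)" using choice_lt[OF s2] by blast
  define \<tau> where "\<tau> = inv_into {..<R} \<sigma>2"
  have bt: "bij_betw \<tau> {..<R} {..<R}" unfolding \<tau>_def using b2 by (rule bij_betw_inv_into)
  define \<sigma> where "\<sigma> j = (if j < R then \<tau> (\<sigma>1 j) else j)" for j
  have bs: "bij_betw \<sigma> {..<R} {..<R}"
  proof -
    have "bij_betw (\<tau> \<circ> \<sigma>1) {..<R} {..<R}" by (rule bij_betw_trans[OF b1 bt])
    then show ?thesis by (rule bij_betw_cong[THEN iffD1, rotated]) (auto simp: \<sigma>_def)
  qed
  have perm: "\<sigma> permutes {..<R}" by (rule bij_imp_permutes[OF bs]) (simp add: \<sigma>_def)
  define \<alpha> where "\<alpha> j l = B2 (\<sigma> j) l / B1 j l" for j l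
  have "\<forall>j<R. (\<forall>i<k. \<alpha> j i \<noteq> 0 \<and> v (\<sigma> j) i = (\<lambda>x. \<alpha> j i * u' j i x)) \<and> (\<Prod>i<k. \<alpha> j i) * mu (\<sigma> j) = lam' j"
  proof (intro allI impI)
    fix j assume j: "j < R"
    have s1j: "\<sigma>1 j < R" using b1 j by (auto simp: bij_betw_def)
    have sj: "\<sigma> j < R" using bs j by (auto simp: bij_betw_def)
    have s2s: "\<sigma>2 (\<sigma> j) = \<sigma>1 j" using j s1j b2 unfolding \<sigma>_def \<tau>_def
      by (simp add: bij_betw_inv_into_right)
    have A: "\<forall>l<k. B1 j l \<noteq> 0 \<and> u' j l = (\<lambda>x. B1 j l * u (\<sigma>1 j) l x)" "lam' j * (\<Prod>l<k. B1 j l) = lam (\<sigma>1 j)"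
      using B1 j by auto
    have B: "\<forall>l<k. B2 (\<sigma> j) l \<noteq> 0 \<and> v (\<sigma> j) l = (\<lambda>x. B2 (\<sigma> j) l * u (\<sigma>1 j) l x)" "mu (\<sigma> j) * (\<Prod>l<k. B2 (\<sigma> j) l) = lam (\<sigma>1 j)"
      using B2 sj s2s by auto
    have "\<forall>i<k. \<alpha> j i \<noteq> 0 \<and> v (\<sigma> j) i = (\<lambda>x. \<alpha> j i * u' j i x)"
      using A(1) B(1) by (auto simp: \<alpha>_def fun_eq_iff)
    moreover have "(\<Prod>i<k. \<alpha> j i) * mu (\<sigma> j) = lam' j"
    proof -
      have p1: "(\<Prod>l<k. B1 j l) \<noteq> 0" using A(1) by simp
      have "(\<Prod>i<k. \<alpha> j i) = (\<Prod>l<k. B2 (\<sigma> j) l) / (\<Prod>l<k. B1 j l)"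
        by (simp add: \<alpha>_def prod_dividef)
      then have "(\<Prod>i<k. \<alpha> j i) * mu (\<sigma> j) = (mu (\<sigma> j) * (\<Prod>l<k. B2 (\<sigma> j) l)) / (\<Prod>l<k. B1 j l)"
        by simp
      also have "\<dots> = (lam' j * (\<Prod>l<k. B1 j l)) / (\<Prod>l<k. B1 j l)" using A(2) B(2) by simp
      also have "\<dots> = lam' j" using p1 by simp
      finally show ?thesis .
    qed
    ultimately show "(\<forall>i<k. \<alpha> j i \<noteq> 0 \<and> v (\<sigma> j) i = (\<lambda>x. \<alpha> j i * u' j i x)) \<and> (\<Prod>i<k. \<alpha> j i) * mu (\<sigma> j) = lam' j"
      by blast
  qed
  with perm show "\<exists>\<sigma> \<alpha>. \<sigma> permutes {..<R} \<and> (\<forall>j<R. (\<forall>i<k. \<alpha> j i \<noteq> 0 \<and> v (\<sigma> j) i = (\<lambda>x. \<alpha> j i * u' j i x)) \<and> (\<Prod>i<k. \<alpha> j i) * mu (\<sigma> j) = lam' j)"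
    by blast
qed


end

lemma unit_nz: "unit_vec m v \<Longrightarrow> \<exists>x. v x \<noteq> 0"
  unfolding unit_vec_def ip_def by (metis (no_types, lifting) mult_zero_left sum.neutral zero_neq_one)

lemma orth_fcr:
  assumes o: "\<forall>i<R. \<forall>j<R. ip N (f i) (f j) = (if i = j then 1 else 0)"
  shows "full_col_rank N R f"
  unfolding full_col_rank_def
proof (intro allI impI)
  fix coef i assume h: "\<forall>x<N. (\<Sum>j<R. coef j * f j x) = 0" and i: "i < R"
  have "0 = (\<Sum>x<N. f i x * (\<Sum>j<R. coef j * f j x))" using h by simp
  also have "\<dots> = (\<Sum>x<N. \<Sum>j<R. coef j * (f i x * f j x))"
    by (simp add: sum_distrib_left mult_ac)
  also have "\<dots> = (\<Sum>j<R. \<Sum>x<N. coef j * (f i x * f j x))" by (rule sum.swap)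
  also have "\<dots> = (\<Sum>j<R. coef j * ip N (f i) (f j))" by (simp add: ip_def sum_distrib_left)
  also have "\<dots> = (\<Sum>j<R. if j = i then coef i else 0)"
    by (rule sum.cong) (use o i in auto)
  also have "\<dots> = coef i" using i by simp
  finally show "coef i = 0" by simp
qed

lemma fcr_sub:
  assumes g: "full_col_rank N r g" and h: "bij_betw h {..<R} J" and J: "J \<subseteq> {..<r}"
  shows "full_col_rank N R (\<lambda>i. g (h i))"
  unfolding full_col_rank_def
proof (intro allI impI)
  fix coef i assume c: "\<forall>x<N. (\<Sum>i<R. coef i * g (h i) x) = 0" and i: "i < R"
  define c' where "c' j = (if j \<in> J then coef (inv_into {..<R} h j) else 0)" for j
  have inj: "inj_on h {..<R}" using h by (rule bij_betw_imp_inj_on)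
  have "(\<Sum>j<r. c' j * g j x) = 0" if x: "x < N" for x
  proof -
    have "(\<Sum>j<r. c' j * g j x) = (\<Sum>j\<in>J. c' j * g j x)"
      by (rule sum.mono_neutral_right) (use J in \<open>auto simp: c'_def\<close>)
    also have "\<dots> = (\<Sum>i<R. c' (h i) * g (h i) x)"
      using sum.reindex_bij_betw[OF h, of "\<lambda>j. c' j * g j x"] by simp
    also have "\<dots> = (\<Sum>i<R. coef i * g (h i) x)"
      by (rule sum.cong) (use h inj in \<open>auto simp: c'_def bij_betw_def\<close>)
    finally show ?thesis using c x by simp
  qed
  then have "c' (h i) = 0" by (rule fcrD[OF g]) (use h J i in \<open>auto simp: bij_betw_def\<close>)
  then show "coef i = 0" using h inj i by (auto simp: c'_def bij_betw_def)
qed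

lemma main_gen:
  assumes k3: "3 \<le> k" and s1: "1 \<le> s" and P: "P_decomp k n s r sig a T"
    and modes: "\<forall>l\<in>{1,2}. l < s \<or> full_col_rank (n l) r (\<lambda>j. a j l)"
  shows "identifiable k n T"
proof -
  define J where "J = {i. i < r \<and> sig i \<noteq> 0}"
  define R where "R = card J"
  have fJ: "finite J" and Jr: "J \<subseteq> {..<r}" unfolding J_def by auto
  obtain h where h0: "bij_betw h {0..<R} J" using ex_bij_betw_nat_finite[OF fJ] unfolding R_def by blast
  have h: "bij_betw h {..<R} J" using h0 by (simp add: atLeast0LessThan)
  have inj: "inj_on h {..<R}" using h by (rule bij_betw_imp_inj_on)
  have hJ: "h i \<in> J" if "i < R" for i using h that by (auto simp: bij_betw_def)
  have hr: "h i < r" if "i < R" for i using hJ[OF that] Jr by auto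
  define lam where "lam i = sig (h i)" for i
  define u where "u i = a (h i)" for i
  have unit: "\<forall>i<r. \<forall>l<k. unit_vec (n l) (a i l)"
    and orth: "\<forall>l<s. \<forall>i<r. \<forall>j<r. i \<noteq> j \<longrightarrow> ip (n l) (a i l) (a j l) = 0"
    and T: "T = tsum k r sig a" using P unfolding P_decomp_def by auto
  have T': "T = tsum k R lam u"
  proof
    fix idx
    have "T idx = (\<Sum>j<r. sig j * (\<Prod>l<k. a j l (idx l)))" using T by (simp add: tsum_def)
    also have "\<dots> = (\<Sum>j\<in>J. sig j * (\<Prod>l<k. a j l (idx l)))"
      by (rule sum.mono_neutral_right) (use Jr in \<open>auto simp: J_def\<close>)
    also have "\<dots> = (\<Sum>i<R. sig (h i) * (\<Prod>l<k. a (h i) l (idx l)))"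
      using sum.reindex_bij_betw[OF h, of "\<lambda>j. sig j * (\<Prod>l<k. a j l (idx l))"] by simp
    finally show "T idx = tsum k R lam u idx" by (simp add: tsum_def lam_def u_def)
  qed
  have orthl: "\<forall>i<R. \<forall>j<R. ip (n l) (u i l) (u j l) = (if i = j then 1 else 0)" if l: "l < s" "l < k" for l
  proof (intro allI impI)
    fix i j assume ij: "i < R" "j < R"
    show "ip (n l) (u i l) (u j l) = (if i = j then 1 else 0)"
    proof (cases "i = j")
      case True then show ?thesis using unit hr[OF ij(1)] l by (simp add: u_def unit_vec_def)
    next
      case False
      then have "h i \<noteq> h j" using inj ij by (auto dest: inj_onD)
      then show ?thesis using orth hr[OF ij(1)] hr[OF ij(2)] l False by (simp add: u_def)
    qed
  qed
  have fl: "full_col_rank (n l) R (\<lambda>j. u j l)" if l: "l \<in> {1,2}" for l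
  proof (cases "l < s")
    case True
    then show ?thesis using orthl[of l] l k3 by (intro orth_fcr) auto
  next
    case False
    then have "full_col_rank (n l) r (\<lambda>j. a j l)" using modes l by blast
    from fcr_sub[OF this h Jr] show ?thesis by (simp add: u_def)
  qed
  have "keyctx k R n lam u"
    unfolding keyctx_def
  proof (intro conjI)
    show "3 \<le> k" by (rule k3)
    show "\<forall>i<R. lam i \<noteq> 0" using hJ by (auto simp: lam_def J_def)
    show "\<forall>i<R. \<forall>l<k. in_Rn (n l) (u i l)" using unit hr by (auto simp: u_def unit_vec_def)
    show "\<forall>i<R. \<forall>l<k. \<exists>x. u i l x \<noteq> 0"
    proof (intro allI impI)
      fix i l assume "i < R" "l < k"
      then have "unit_vec (n l) (a (h i) l)" using unit hr by blast
      then show "\<exists>x. u i l x \<noteq> 0" unfolding u_def by (rule unit_nz)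
    qed
    show "\<forall>i<R. \<forall>j<R. ip (n 0) (u i 0) (u j 0) = (if i = j then 1 else 0)"
      using orthl[of 0] s1 k3 by auto
    show "full_col_rank (n 1) R (\<lambda>j. u j 1)" using fl[of 1] by simp
    show "full_col_rank (n 2) R (\<lambda>j. u j 2)" using fl[of 2] by simp
  qed
  from keyctx.ident[OF this] show ?thesis using T' by simp
qed

theorem proposition3p2:
  fixes k s r :: nat and n :: "nat \<Rightarrow> nat"
  assumes "k \<ge> 3" and "1 \<le> s" and "s \<le> k" and "\<forall>l<s. r \<le> n l"
  shows "(\<forall>T sig a. P_decomp k n s r sig a T \<and>
            (\<forall>l. s \<le> l \<and> l < k \<longrightarrow> full_col_rank (n l) r (\<lambda>j. a j l))
            \<longrightarrow> identifiable k n T)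
       \<and> (s \<ge> 3 \<longrightarrow> (\<forall>T\<in>P_set k n s r. identifiable k n T))"
proof (intro conjI allI impI ballI)
  fix T sig a
  assume h: "P_decomp k n s r sig a T \<and> (\<forall>l. s \<le> l \<and> l < k \<longrightarrow> full_col_rank (n l) r (\<lambda>j. a j l))"
  have "\<forall>l\<in>{1,2}. l < s \<or> full_col_rank (n l) r (\<lambda>j. a j l)"
  proof
    fix l :: nat assume l: "l \<in> {1,2}"
    show "l < s \<or> full_col_rank (n l) r (\<lambda>j. a j l)"
    proof (cases "l < s")
      case False then show ?thesis using h l assms(1) by auto
    qed simp
  qed
  then show "identifiable k n T" using main_gen[OF assms(1,2)] h by blast
next
  fix T assume s3: "3 \<le> s" and T: "T \<in> P_set k n s r"
  then obtain sig a where P: "P_decomp k n s r sig a T" unfolding P_set_def by auto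
  have "\<forall>l\<in>{1,2}. l < s \<or> full_col_rank (n l) r (\<lambda>j. a j l)" using s3 by auto
  then show "identifiable k n T" using main_gen[OF assms(1,2) P] by blast
qed

end
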